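(* Let $W_1,\ldots,W_n$ be i.i.d. with the unit-log-Laplace PDF $$f_W(w;\sigma_\rho)=\frac{1}{\sqrt2\,w(1-w)\sigma_\rho}\exp\!\left(-\frac{\sqrt2}{\sigma_\rho}\Big|\log\frac{w}{1-w}\Big|\right),\qquad 0<w<1,$$ and let $\theta=\theta_0=1/\sigma_{\rho,0}\in(0,\infty)$ be the true value of the parameter $\theta=1/\sigma_\rho$. Then, with probability $1$, for all sufficiently large $n$ a unique maximum likelihood estimator of $\sigma_\rho$ exists, and this estimator is consistent and asymptotically normal. *)

theory Defs
  imports "HOL-Probability.Probability"
begin

definition fW :: "real \<Rightarrow> real \<Rightarrow> real" where
  "fW \<sigma> w = (if 0 < w \<and> w < 1 then
      1 / (sqrt 2 * w * (1 - w) * \<sigma>) * exp (- (sqrt 2 / \<sigma>) * \<bar>ln (w / (1 - w))\<bar>)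
    else 0)"

definition likelihood :: "(nat \<Rightarrow> real) \<Rightarrow> nat \<Rightarrow> real \<Rightarrow> real" where
  "likelihood ws n \<sigma> = (\<Prod>i<n. fW \<sigma> (ws i))"

definition is_mle :: "(nat \<Rightarrow> real) \<Rightarrow> nat \<Rightarrow> real \<Rightarrow> bool" where
  "is_mle ws n s \<longleftrightarrow> 0 < s \<and> (\<forall>t>0. likelihood ws n t \<le> likelihood ws n s)"

text \<open>The maximum likelihood estimator (meaningful when it exists uniquely).\<close>
definition mle :: "(nat \<Rightarrow> real) \<Rightarrow> nat \<Rightarrow> real" where
  "mle ws n = (THE s. is_mle ws n s)"

end

theory Submission
  imports Defs "HOL-Real_Asymp.Real_Asymp"
begin


definition logit :: "real \<Rightarrow> real" where "logit w = ln (w / (1 - w))"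

lemma logit_deriv:
  assumes "0 < w" "w < 1"
  shows "(logit has_real_derivative 1 / (w * (1 - w))) (at w within S)"
proof -
  have d1: "((\<lambda>w. w / (1 - w)) has_real_derivative 1 / (1 - w)^2) (at w within S)"
  proof -
    have "((\<lambda>w. w / (1 - w)) has_real_derivative (1 * (1 - w) - w * (- 1)) / ((1 - w) * (1 - w))) (at w within S)"
      using assms by (intro derivative_eq_intros) auto
    then show ?thesis by (simp add: power2_eq_square)
  qed
  have d2: "(ln has_real_derivative 1 / (w / (1 - w))) (at (w / (1 - w)))"
    using assms by (intro DERIV_ln_divide) auto
  have "((\<lambda>w. ln (w / (1 - w))) has_real_derivative (1 / (w / (1 - w))) * (1 / (1 - w)^2)) (at w within S)"
    using DERIV_chain2[OF d2 d1] by simp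
  moreover have "(1 / (w / (1 - w))) * (1 / (1 - w)^2) = 1 / (w * (1 - w))"
  proof -
    have "1 / (w / (1 - w)) = (1 - w) / w" by simp
    moreover have "(1 - w) / w * (1 / (1 - w)^2) = 1 / (w * (1 - w))"
      using assms by (simp add: power2_eq_square)
    ultimately show ?thesis by simp
  qed
  ultimately show ?thesis unfolding logit_def by simp
qed

lemma fW_alt:
  assumes "0 < w" "w < 1" "s \<noteq> 0"
  shows "fW s w = (sqrt 2 / s) / 2 * exp (- (sqrt 2 / s) * \<bar>logit w\<bar>) * (1 / (w * (1 - w)))"
proof -
  have q: "\<And>x. sqrt 2 * (sqrt 2 * x) = (2::real) * x" by (simp add: mult.assoc[symmetric])
  have "w * (1 - w) \<noteq> 0" using assms by simp
  then show ?thesis using assms q unfolding fW_def logit_def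
    by (simp add: field_simps q)
qed

lemma fW_measurable[measurable]: "fW s \<in> borel_measurable borel"
  unfolding fW_def by measurable

lemma fW_nonneg: "0 < s \<Longrightarrow> 0 \<le> fW s w"
  unfolding fW_def by simp

lemma int_left:
  assumes s: "0 < s" and c: "0 < c" "c \<le> 1/2"
  shows "(fW s has_integral (1/2 - exp ((sqrt 2 / s) * logit c) / 2)) {c..1/2}"
proof -
  let ?l = "sqrt 2 / s"
  have "(fW s has_integral ((\<lambda>w. exp (?l * logit w) / 2) (1/2) - (\<lambda>w. exp (?l * logit w) / 2) c)) {c..1/2}"
  proof (rule fundamental_theorem_of_calculus)
    fix x assume x: "x \<in> {c..1/2}"
    then have x0: "0 < x" "x < 1" "x \<le> 1/2" using c by auto
    have lx: "logit x \<le> 0" using x0 unfolding logit_def by (simp add: ln_le_zero_iff)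
    have "((\<lambda>w. exp (?l * logit w) / 2) has_real_derivative exp (?l * logit x) * (?l * (1 / (x * (1 - x)))) / 2) (at x within {c..1/2})"
      by (rule has_field_derivative_at_within) (intro DERIV_cdivide DERIV_fun_exp DERIV_cmult logit_deriv x0)
    moreover have "exp (?l * logit x) * (?l * (1 / (x * (1 - x)))) / 2 = fW s x"
      using x0 lx s by (simp add: fW_alt ac_simps)
    ultimately show "((\<lambda>w. exp (?l * logit w) / 2) has_vector_derivative fW s x) (at x within {c..1/2})"
      by (simp add: has_real_derivative_iff_has_vector_derivative)
  qed (use c in auto)
  moreover have "logit (1/2) = 0" by (simp add: logit_def)
  ultimately show ?thesis by simp
qed

lemma int_right:
  assumes s: "0 < s" and d: "1/2 \<le> d" "d < 1"
  shows "(fW s has_integral (1/2 - exp (- (sqrt 2 / s) * logit d) / 2)) {1/2..d}"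
proof -
  let ?l = "sqrt 2 / s"
  have "(fW s has_integral ((\<lambda>w. exp (- ?l * logit w) / (- 2)) d - (\<lambda>w. exp (- ?l * logit w) / (- 2)) (1/2))) {1/2..d}"
  proof (rule fundamental_theorem_of_calculus)
    fix x assume x: "x \<in> {1/2..d}"
    then have x0: "0 < x" "x < 1" "1/2 \<le> x" using d by auto
    have lx: "logit x \<ge> 0" using x0 unfolding logit_def by (simp add: field_simps)
    have "((\<lambda>w. exp (- ?l * logit w) / (- 2)) has_real_derivative (exp (- ?l * logit x) * (- ?l * (1 / (x * (1 - x))))) / (- 2)) (at x within {1/2..d})"
      by (rule has_field_derivative_at_within) (intro DERIV_cdivide DERIV_fun_exp DERIV_cmult logit_deriv x0)
    moreover have "(exp (- ?l * logit x) * (- ?l * (1 / (x * (1 - x))))) / (- 2) = fW s x"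
      using x0 lx s by (simp add: fW_alt ac_simps)
    ultimately show "((\<lambda>w. exp (- ?l * logit w) / (- 2)) has_vector_derivative fW s x) (at x within {1/2..d})"
      by (simp add: has_real_derivative_iff_has_vector_derivative)
  qed (use d in auto)
  moreover have "logit (1/2) = 0" by (simp add: logit_def)
  ultimately show ?thesis by simp
qed


lemma exp_logit: "0 < w \<Longrightarrow> w < 1 \<Longrightarrow> exp (logit w) = w / (1 - w)"
  unfolding logit_def by simp

lemma logit_abs_le_iff:
  assumes w: "0 < w" "w < 1" and a: "0 \<le> a"
  shows "\<bar>logit w\<bar> \<le> a \<longleftrightarrow> 1 / (1 + exp a) \<le> w \<and> w \<le> exp a / (1 + exp a)"
proof -
  have p: "0 < w / (1 - w)" using w by simp
  have "logit w \<le> a \<longleftrightarrow> w / (1 - w) \<le> exp a"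
    using exp_le_cancel_iff[of "logit w" a] exp_logit[OF w] by simp
  also have "\<dots> \<longleftrightarrow> w \<le> exp a * (1 - w)" using w by (simp add: divide_le_eq)
  also have "\<dots> \<longleftrightarrow> w \<le> exp a / (1 + exp a)"
    by (simp add: le_divide_eq add_pos_pos algebra_simps)
  finally have 1: "logit w \<le> a \<longleftrightarrow> w \<le> exp a / (1 + exp a)" .
  have "- a \<le> logit w \<longleftrightarrow> exp (- a) \<le> w / (1 - w)"
    using exp_le_cancel_iff[of "- a" "logit w"] exp_logit[OF w] by simp
  also have "\<dots> \<longleftrightarrow> 1 \<le> exp a * (w / (1 - w))"
    by (simp add: exp_minus inverse_eq_divide divide_le_eq mult.commute)
  also have "\<dots> \<longleftrightarrow> 1 - w \<le> exp a * w" using w by (simp add: le_divide_eq)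
  also have "\<dots> \<longleftrightarrow> 1 / (1 + exp a) \<le> w"
    by (simp add: divide_le_eq add_pos_pos algebra_simps)
  finally have 2: "- a \<le> logit w \<longleftrightarrow> 1 / (1 + exp a) \<le> w" .
  show ?thesis using 1 2 by linarith
qed

lemma cdf_Y:
  assumes s: "0 < s" and a: "0 \<le> a"
  shows "(\<integral>\<^sup>+w. ennreal (fW s w) * indicator {w. \<bar>logit w\<bar> \<le> a} w \<partial>lborel) = ennreal (1 - exp (- a * (sqrt 2 / s)))"
proof -
  define c where "c = 1 / (1 + exp a)"
  define d where "d = exp a / (1 + exp a)"
  have e1: "1 \<le> exp a" "0 < 1 + exp a" using a by (auto simp: add_pos_pos)
  have ne: "1 + exp a \<noteq> 0" using e1 by linarith
  have c0: "0 < c" "c \<le> 1/2" using e1 by (auto simp: c_def field_simps)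
  have d0: "1/2 \<le> d" "d < 1" using e1 by (auto simp: d_def field_simps)
  have lc: "logit c = - a"
  proof -
    have "c / (1 - c) = exp (- a)" using ne unfolding c_def by (simp add: field_simps exp_minus add_pos_pos)
    then show ?thesis unfolding logit_def by simp
  qed
  have ld: "logit d = a"
  proof -
    have "d / (1 - d) = exp a" using ne unfolding d_def by (simp add: field_simps add_pos_pos)
    then show ?thesis unfolding logit_def by simp
  qed
  have "(fW s has_integral ((1/2 - exp ((sqrt 2 / s) * logit c) / 2) + (1/2 - exp (- (sqrt 2 / s) * logit d) / 2))) {c..d}"
    using c0 d0 by (intro has_integral_combine[of c "1/2" d] int_left int_right s) auto
  then have I: "(fW s has_integral (1 - exp (- a * (sqrt 2 / s)))) {c..d}"
    using lc ld by (simp add: algebra_simps)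
  have eq: "\<And>w. ennreal (fW s w) * indicator {w. \<bar>logit w\<bar> \<le> a} w = ennreal (if w \<in> {c..d} then fW s w else 0)"
  proof -
    fix w
    show "ennreal (fW s w) * indicator {w. \<bar>logit w\<bar> \<le> a} w = ennreal (if w \<in> {c..d} then fW s w else 0)"
    proof (cases "0 < w \<and> w < 1")
      case True
      then show ?thesis using logit_abs_le_iff[of w a] a unfolding c_def d_def
        by (auto simp: indicator_def)
    next
      case False
      then have "fW s w = 0" unfolding fW_def by auto
      then show ?thesis by simp
    qed
  qed
  have "(\<integral>\<^sup>+w. ennreal (fW s w) * indicator {w. \<bar>logit w\<bar> \<le> a} w \<partial>lborel)
      = (\<integral>\<^sup>+w. ennreal (if w \<in> {c..d} then fW s w else 0) \<partial>lborel)"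
    by (simp add: eq)
  also have "\<dots> = ennreal (1 - exp (- a * (sqrt 2 / s)))"
  proof (rule nn_integral_has_integral_lborel)
    show "(\<lambda>w. if w \<in> {c..d} then fW s w else 0) \<in> borel_measurable borel" by measurable
    show "\<And>x. 0 \<le> (if x \<in> {c..d} then fW s x else 0)" using fW_nonneg[OF s] by simp
    show "((\<lambda>w. if w \<in> {c..d} then fW s w else 0) has_integral 1 - exp (- a * (sqrt 2 / s))) UNIV"
      using I by (subst has_integral_restrict_UNIV)
  qed
  finally show ?thesis .
qed


lemma density_lborel_singleton:
  assumes [measurable]: "f \<in> borel_measurable borel"
  shows "measure (density lborel (\<lambda>x. ennreal (f x))) {a} = 0"
proof -
  have "emeasure (density lborel (\<lambda>x. ennreal (f x))) {a} = (\<integral>\<^sup>+x. ennreal (f x) * indicator {a} x \<partial>lborel)"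
    by (subst emeasure_density) auto
  also have "\<dots> = 0"
  proof (rule nn_integral_zero')
    show "AE x in lborel. ennreal (f x) * indicator {a} x = 0"
      using AE_lborel_singleton[of a] by eventually_elim auto
  qed
  finally show ?thesis by (simp add: measure_def)
qed

lemma weak_conv_scale:
  fixes Z :: "nat \<Rightarrow> 'a \<Rightarrow> real" and c :: real
  assumes M: "prob_space M" and Zm: "\<And>n. Z n \<in> borel_measurable M" and c: "0 < c"
    and conv: "weak_conv_m (\<lambda>n. distr M borel (Z n)) std_normal_distribution"
  shows "weak_conv_m (\<lambda>n. distr M borel (\<lambda>\<omega>. c * Z n \<omega>)) (density lborel (normal_density 0 c))"
proof -
  interpret std: prob_space std_normal_distribution
    using real_dist_normal_dist by (simp add: real_distribution_def)
  have "distributed std_normal_distribution lborel (\<lambda>x. 0 + c * id x) (normal_density (0 + c * 0) (\<bar>c\<bar> * 1))"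
    by (rule std.normal_density_affine) (use c in \<open>auto simp: distributed_def distr_id2\<close>)
  then have D: "density lborel (normal_density 0 c) = distr std_normal_distribution lborel (\<lambda>x. c * x)"
    using c by (simp add: distributed_def)
  have cdfN: "cdf (density lborel (normal_density 0 c)) x = cdf std_normal_distribution (x / c)" for x
  proof -
    have "cdf (density lborel (normal_density 0 c)) x = measure (distr std_normal_distribution lborel (\<lambda>x. c * x)) {..x}"
      unfolding D cdf_def ..
    also have "\<dots> = measure std_normal_distribution ((\<lambda>x. c * x) -` {..x} \<inter> space std_normal_distribution)"
      by (rule measure_distr) auto
    also have "(\<lambda>x. c * x) -` {..x} \<inter> space std_normal_distribution = {..x/c}"
      using c by (auto simp: pos_le_divide_eq mult.commute)
    finally show ?thesis by (simp add: cdf_def)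
  qed
  have cdfZ: "cdf (distr M borel (\<lambda>\<omega>. c * Z n \<omega>)) x = cdf (distr M borel (Z n)) (x / c)" for n x
  proof -
    have "cdf (distr M borel (\<lambda>\<omega>. c * Z n \<omega>)) x = measure M ((\<lambda>\<omega>. c * Z n \<omega>) -` {..x} \<inter> space M)"
      unfolding cdf_def using Zm by (intro measure_distr) auto
    also have "(\<lambda>\<omega>. c * Z n \<omega>) -` {..x} \<inter> space M = Z n -` {..x/c} \<inter> space M"
      using c by (auto simp: pos_le_divide_eq mult.commute)
    also have "measure M \<dots> = cdf (distr M borel (Z n)) (x / c)"
      unfolding cdf_def using Zm by (intro measure_distr[symmetric]) auto
    finally show ?thesis .
  qed
  have contS: "isCont (cdf std_normal_distribution) y" for y
  proof -
    interpret rd: real_distribution std_normal_distribution by (rule real_dist_normal_dist)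
    show ?thesis by (simp add: rd.isCont_cdf density_lborel_singleton)
  qed
  show ?thesis
    unfolding weak_conv_m_def weak_conv_def
  proof (intro allI impI)
    fix x
    have "(\<lambda>n. cdf (distr M borel (Z n)) (x / c)) \<longlonglongrightarrow> cdf std_normal_distribution (x / c)"
      using conv contS unfolding weak_conv_m_def weak_conv_def by blast
    then show "(\<lambda>n. cdf (distr M borel (\<lambda>\<omega>. c * Z n \<omega>)) x) \<longlonglongrightarrow> cdf (density lborel (normal_density 0 c)) x"
      by (simp add: cdfZ cdfN)
  qed
qed


lemma logit_measurable[measurable]: "logit \<in> borel_measurable borel"
  unfolding logit_def by measurable

locale mle_setting = prob_space M for M :: "'a measure" +
  fixes W :: "nat \<Rightarrow> 'a \<Rightarrow> real" and \<sigma>0 :: real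
  assumes indep: "indep_vars (\<lambda>_. borel) W UNIV"
    and distW: "\<And>i. distributed M lborel (W i) (\<lambda>w. ennreal (fW \<sigma>0 w))"
    and pos: "0 < \<sigma>0"
begin

definition "l = sqrt 2 / \<sigma>0"
definition "Y i \<omega> = \<bar>logit (W i \<omega>)\<bar>"
definition "S n \<omega> = (\<Sum>i<n. Y i \<omega>)"
definition "mu = 1 / l"

lemma l_pos: "0 < l" unfolding l_def using pos by simp
lemma mu_pos: "0 < mu" unfolding mu_def using l_pos by simp

lemma W_meas[measurable]: "W i \<in> borel_measurable M"
  using distributed_measurable[OF distW[of i]] by simp

lemma Y_meas[measurable]: "Y i \<in> borel_measurable M"
  unfolding Y_def by measurable

lemma S_meas[measurable]: "S n \<in> borel_measurable M"
  unfolding S_def by measurable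

lemma Y_nonneg: "0 \<le> Y i \<omega>" unfolding Y_def by simp

lemma Y_exp: "distributed M lborel (Y i) (exponential_density l)"
proof (subst exponential_distributed_iff[OF l_pos], intro conjI allI impI)
  show "Y i \<in> borel_measurable M" by measurable
  fix a :: real assume a: "0 \<le> a"
  have "emeasure M {x \<in> space M. Y i x \<le> a} = emeasure M (W i -` {w. \<bar>logit w\<bar> \<le> a} \<inter> space M)"
    unfolding Y_def by (intro arg_cong[where f="emeasure M"]) auto
  also have "\<dots> = (\<integral>\<^sup>+w. ennreal (fW \<sigma>0 w) * indicator {w. \<bar>logit w\<bar> \<le> a} w \<partial>lborel)"
    by (rule distributed_emeasure[OF distW]) measurable
  also have "\<dots> = ennreal (1 - exp (- a * l))"
    using cdf_Y[OF pos a] by (simp add: l_def)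
  finally have "ennreal (prob {x \<in> space M. Y i x \<le> a}) = ennreal (1 - exp (- a * l))"
    by (simp add: emeasure_eq_measure)
  moreover have "0 \<le> 1 - exp (- a * l)" using a l_pos by simp
  ultimately show "prob {x \<in> space M. Y i x \<le> a} = 1 - exp (- a * l)"
    by (simp add: ennreal_inj)
qed

lemma Y_int: "integrable M (\<lambda>x. Y i x ^ k)"
  by (rule erlang_ith_moment_integrable[OF l_pos Y_exp])

lemma Y_int1: "integrable M (Y i)"
  using Y_int[of i 1] by simp

lemma EY: "expectation (Y i) = mu"
  using exponential_distributed_expectation[OF l_pos Y_exp] by (simp add: mu_def)

lemma varY: "variance (Y i) = mu\<^sup>2"
  using exponential_distributed_variance[OF l_pos Y_exp] by (simp add: mu_def power_divide)

lemma distrY: "distr M borel (Y i) = density lborel (exponential_density l)"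
proof -
  have "distr M borel (Y i) = distr M lborel (Y i)" by (rule distr_cong) auto
  also have "\<dots> = density lborel (exponential_density l)"
    using Y_exp[of i] by (simp add: distributed_def)
  finally show ?thesis .
qed

lemma AE_W01: "AE \<omega> in M. 0 < W i \<omega> \<and> W i \<omega> < 1"
proof (subst distributed_AE2[OF distW])
  show "Measurable.pred lborel (\<lambda>x::real. 0 < x \<and> x < 1)" unfolding measurable_lborel2 by measurable
  show "AE x in lborel. 0 < ennreal (fW \<sigma>0 x) \<longrightarrow> 0 < x \<and> x < 1"
    by (rule AE_I2) (auto simp: fW_def)
qed

lemma AE_Ypos: "AE \<omega> in M. 0 < Y i \<omega>"
proof -
  have "prob {x \<in> space M. Y i x \<le> 0} = 1 - exp (- 0 * l)"
    using exponential_distributed_iff[OF l_pos, of "Y i"] Y_exp[of i] by blast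
  then have "prob {x \<in> space M. Y i x \<le> 0} = 0" by simp
  then have e: "emeasure M {x \<in> space M. Y i x \<le> 0} = 0" by (simp add: emeasure_eq_measure)
  show ?thesis
    by (rule AE_I[OF _ e]) auto
qed

end


lemma fW_split:
  assumes "0 < w" "w < 1" "0 < t"
  shows "fW t w = 1 / (sqrt 2 * w * (1 - w)) * (1 / t) * exp (- (sqrt 2 / t) * \<bar>logit w\<bar>)"
  using assms unfolding fW_def logit_def by simp

lemma lik_form:
  assumes "\<forall>i<n. 0 < ws i \<and> ws i < 1" "0 < t"
  shows "likelihood ws n t = (\<Prod>i<n. 1 / (sqrt 2 * ws i * (1 - ws i))) * (1/t)^n
            * exp (- (sqrt 2 / t) * (\<Sum>i<n. \<bar>logit (ws i)\<bar>))"
proof -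
  have "likelihood ws n t = (\<Prod>i<n. 1 / (sqrt 2 * ws i * (1 - ws i)) * (1 / t) * exp (- (sqrt 2 / t) * \<bar>logit (ws i)\<bar>))"
    unfolding likelihood_def using assms by (intro prod.cong refl fW_split) auto
  also have "\<dots> = (\<Prod>i<n. 1 / (sqrt 2 * ws i * (1 - ws i))) * (1/t)^n * (\<Prod>i<n. exp (- (sqrt 2 / t) * \<bar>logit (ws i)\<bar>))"
    by (simp only: prod.distrib prod_constant card_lessThan)
  also have "(\<Prod>i<n. exp (- (sqrt 2 / t) * \<bar>logit (ws i)\<bar>)) = exp (- (sqrt 2 / t) * (\<Sum>i<n. \<bar>logit (ws i)\<bar>))"
    by (simp add: exp_sum sum_distrib_left)
  finally show ?thesis .
qed

lemma gap:
  fixes B s t :: real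
  assumes n: "1 \<le> n" and B: "0 < B" and s: "s = B / n" and t: "0 < t" "t \<noteq> s"
  shows "(1/t)^n * exp (- B / t) < (1/s)^n * exp (- B / s)"
proof -
  have s0: "0 < s" using s B n by simp
  define u where "u = s / t"
  have u0: "0 < u" "u \<noteq> 1" using s0 t by (auto simp: u_def)
  have "ln u \<noteq> u - 1" using ln_eq_minus_one[of u] u0 by auto
  then have "ln u < u - 1" using ln_le_minus_one[of u] u0 by simp
  then have "exp (ln u) < exp (u - 1)" by simp
  then have "u < exp (u - 1)" using u0 by simp
  then have "u ^ n < exp (u - 1) ^ n" using u0 n by (intro power_strict_mono) auto
  also have "\<dots> = exp (real n * (u - 1))" by (simp add: exp_of_nat_mult)
  finally have key: "u ^ n < exp (real n * (u - 1))" .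
  have Bn: "B = real n * s" using s n by simp
  have e1: "(1/t)^n = (1/s)^n * u^n" using s0 t by (simp add: u_def power_divide)
  have e2: "exp (- B / t) = exp (- (real n * u))" using Bn by (simp add: u_def)
  have e3: "exp (- B / s) = exp (real n * (u - 1)) * exp (- (real n * u))"
  proof -
    have "exp (real n * (u - 1)) * exp (- (real n * u)) = exp (real n * (u - 1) + - (real n * u))"
      by (rule mult_exp_exp)
    also have "real n * (u - 1) + - (real n * u) = - B / s" using Bn s0 by (simp add: algebra_simps)
    finally show ?thesis by simp
  qed
  have "(1/t)^n * exp (- B / t) = (1/s)^n * exp (- (real n * u)) * u ^ n"
    using e1 e2 by simp
  also have "\<dots> < (1/s)^n * exp (- (real n * u)) * exp (real n * (u - 1))"
    using key s0 by (intro mult_strict_left_mono) auto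
  also have "\<dots> = (1/s)^n * exp (- B / s)" using e3 by simp
  finally show ?thesis .
qed

lemma is_mle_good:
  assumes n: "1 \<le> n" and w: "\<forall>i<n. 0 < ws i \<and> ws i < 1" and A: "0 < (\<Sum>i<n. \<bar>logit (ws i)\<bar>)"
  shows "is_mle ws n s \<longleftrightarrow> s = sqrt 2 * (\<Sum>i<n. \<bar>logit (ws i)\<bar>) / n"
proof -
  define A where "A = (\<Sum>i<n. \<bar>logit (ws i)\<bar>)"
  define C where "C = (\<Prod>i<n. 1 / (sqrt 2 * ws i * (1 - ws i)))"
  define s0 where "s0 = sqrt 2 * A / n"
  have C0: "0 < C" unfolding C_def using w by (intro prod_pos) auto
  have A0: "0 < A" using A by (simp add: A_def)
  have s00: "0 < s0" using A0 n by (simp add: s0_def)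
  have L: "likelihood ws n t = C * ((1/t)^n * exp (- (sqrt 2 * A) / t))" if "0 < t" for t
    using lik_form[OF w that] by (simp add: C_def A_def)
  have strict: "likelihood ws n t < likelihood ws n s0" if "0 < t" "t \<noteq> s0" for t
    using gap[OF n _ _ that, of "sqrt 2 * A"] A0 C0 s00 that
    by (simp add: L s0_def)
  show ?thesis
  proof
    assume m: "is_mle ws n s"
    then have "0 < s" "likelihood ws n s0 \<le> likelihood ws n s" using s00 by (auto simp: is_mle_def)
    then show "s = sqrt 2 * (\<Sum>i<n. \<bar>logit (ws i)\<bar>) / n"
      using strict[of s] by (force simp: s0_def A_def)
  next
    assume "s = sqrt 2 * (\<Sum>i<n. \<bar>logit (ws i)\<bar>) / n"
    then have ss: "s = s0" by (simp add: s0_def A_def)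
    show "is_mle ws n s" unfolding is_mle_def ss
      using s00 strict by (auto intro: less_imp_le simp del: One_nat_def)
  qed
qed

lemma is_mle_A0:
  assumes n: "1 \<le> n" and w: "\<forall>i<n. 0 < ws i \<and> ws i < 1" and A: "(\<Sum>i<n. \<bar>logit (ws i)\<bar>) = 0"
  shows "\<not> is_mle ws n s"
proof
  assume m: "is_mle ws n s"
  define C where "C = (\<Prod>i<n. 1 / (sqrt 2 * ws i * (1 - ws i)))"
  have C0: "0 < C" unfolding C_def using w by (intro prod_pos) auto
  have L: "likelihood ws n t = C * (1/t)^n" if "0 < t" for t
    using lik_form[OF w that] A by (simp add: C_def)
  have s: "0 < s" using m by (simp add: is_mle_def)
  have "likelihood ws n (s/2) \<le> likelihood ws n s" using m s by (simp add: is_mle_def)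
  then have "C * (2/s)^n \<le> C * (1/s)^n" using s by (simp add: L)
  then have "(2/s)^n \<le> (1/s)^n" using C0 by simp
  moreover have "(1/s)^n < (2/s)^n" using s n by (intro power_strict_mono) (auto simp: divide_strict_right_mono)
  ultimately show False by simp
qed

lemma is_mle_bad:
  assumes "\<not> (\<forall>i<n. 0 < ws i \<and> ws i < 1)"
  shows "is_mle ws n s \<longleftrightarrow> 0 < s"
proof -
  obtain i where i: "i < n" "\<not> (0 < ws i \<and> ws i < 1)" using assms by auto
  have "likelihood ws n t = 0" for t
    unfolding likelihood_def using i by (intro prod_zero) (auto simp: fW_def intro!: bexI[of _ i])
  then show ?thesis by (simp add: is_mle_def)
qed

lemma is_mle_0: "is_mle ws 0 s \<longleftrightarrow> 0 < s"
  by (simp add: is_mle_def likelihood_def)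

lemma mle_formula:
  "mle ws n = (if n = 0 \<or> \<not> (\<forall>i\<in>{..<n}. 0 < ws i \<and> ws i < 1) then The (\<lambda>s::real. 0 < s)
     else if (\<Sum>i<n. \<bar>logit (ws i)\<bar>) = 0 then The (\<lambda>s::real. False)
     else sqrt 2 * (\<Sum>i<n. \<bar>logit (ws i)\<bar>) / n)"
proof -
  consider "n = 0" | "n \<noteq> 0" "\<not> (\<forall>i<n. 0 < ws i \<and> ws i < 1)"
    | "n \<noteq> 0" "\<forall>i<n. 0 < ws i \<and> ws i < 1" "(\<Sum>i<n. \<bar>logit (ws i)\<bar>) = 0"
    | "n \<noteq> 0" "\<forall>i<n. 0 < ws i \<and> ws i < 1" "(\<Sum>i<n. \<bar>logit (ws i)\<bar>) \<noteq> 0" by blast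
  then show ?thesis
  proof cases
    case 1
    then have "is_mle ws n = (\<lambda>s. 0 < s)" by (simp add: fun_eq_iff is_mle_0)
    then show ?thesis using 1 by (simp add: mle_def)
  next
    case 2
    then have "is_mle ws n = (\<lambda>s. 0 < s)" by (simp add: fun_eq_iff is_mle_bad)
    then show ?thesis using 2 by (auto simp: mle_def)
  next
    case 3
    then have "is_mle ws n = (\<lambda>s. False)" using is_mle_A0[of n ws] by (auto simp: fun_eq_iff)
    then show ?thesis using 3 by (simp add: mle_def)
  next
    case 4
    then have A: "0 < (\<Sum>i<n. \<bar>logit (ws i)\<bar>)" by (metis abs_ge_zero order_le_less sum_nonneg)
    have "is_mle ws n = (\<lambda>s. s = sqrt 2 * (\<Sum>i<n. \<bar>logit (ws i)\<bar>) / n)"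
      using is_mle_good[of n ws] 4 A by (auto simp: fun_eq_iff)
    then show ?thesis using 4 by (simp add: mle_def)
  qed
qed

lemma unique_good:
  assumes n: "1 \<le> n" and w: "\<forall>i<n. 0 < ws i \<and> ws i < 1" and A: "0 < (\<Sum>i<n. \<bar>logit (ws i)\<bar>)"
  shows "\<exists>!s. is_mle ws n s" and "mle ws n = sqrt 2 * (\<Sum>i<n. \<bar>logit (ws i)\<bar>) / n"
  using is_mle_good[OF assms] by (auto simp: mle_def)


lemma sandwich_sq:
  fixes a :: "nat \<Rightarrow> real"
  assumes mono: "\<And>m n. m \<le> n \<Longrightarrow> a m \<le> a n" and nonneg: "\<And>n. 0 \<le> a n"
    and conv: "(\<lambda>k. a (k^2) / (real k)^2) \<longlonglongrightarrow> L"
  shows "(\<lambda>n. a n / real n) \<longlonglongrightarrow> L"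
proof -
  define T where "T k = a (k^2) / (real k)^2" for k
  define kf where "kf n = nat \<lfloor>sqrt (real n)\<rfloor>" for n
  have kf_bounds: "(kf n)^2 \<le> n \<and> n < (Suc (kf n))^2" for n
  proof -
    have f0: "0 \<le> \<lfloor>sqrt (real n)\<rfloor>" by simp
    have rk: "real (kf n) = of_int \<lfloor>sqrt (real n)\<rfloor>" unfolding kf_def using f0 by simp
    have l: "real (kf n) \<le> sqrt (real n)" using rk by simp
    have u: "sqrt (real n) < real (kf n) + 1" using rk by linarith
    have "(real (kf n))^2 \<le> (sqrt (real n))^2" using l by (intro power_mono) auto
    then have 1: "real ((kf n)^2) \<le> real n" by simp
    have "(sqrt (real n))^2 < (real (kf n) + 1)^2" using u by (intro power_strict_mono) auto
    then have 2: "real n < real ((Suc (kf n))^2)" by (simp add: add.commute)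
    show ?thesis using 1 2 by (simp only: of_nat_le_iff of_nat_less_iff)
  qed
  have kf_lim: "filterlim kf at_top sequentially"
    unfolding filterlim_at_top
  proof
    fix Z :: nat
    show "eventually (\<lambda>n. Z \<le> kf n) sequentially"
    proof (rule eventually_sequentiallyI[of "Z^2"])
      fix n assume "Z^2 \<le> n"
      then have "(real Z)^2 \<le> real n" by (metis of_nat_le_iff of_nat_power)
      then have "real Z \<le> sqrt (real n)" by (rule real_le_rsqrt)
      then show "Z \<le> kf n" unfolding kf_def by (rule le_nat_floor)
    qed
  qed
  have kf_pos: "eventually (\<lambda>n. 1 \<le> kf n) sequentially"
    using kf_lim unfolding filterlim_at_top by blast
  have r1: "(\<lambda>k. ((real (Suc k)) / real k)^2) \<longlonglongrightarrow> 1" by real_asymp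
  have r2: "(\<lambda>k. (real k / real (Suc k))^2) \<longlonglongrightarrow> 1" by real_asymp
  have TS: "(\<lambda>k. T (Suc k)) \<longlonglongrightarrow> L" using conv unfolding T_def by (rule LIMSEQ_Suc)
  have U: "(\<lambda>k. T (Suc k) * ((real (Suc k)) / real k)^2) \<longlonglongrightarrow> L * 1"
    by (intro tendsto_mult TS r1)
  have Lo: "(\<lambda>k. T k * (real k / real (Suc k))^2) \<longlonglongrightarrow> L * 1"
    using conv unfolding T_def by (intro tendsto_mult r2)
  have U': "(\<lambda>n. T (Suc (kf n)) * ((real (Suc (kf n))) / real (kf n))^2) \<longlonglongrightarrow> L"
    using filterlim_compose[OF U kf_lim] by simp
  have Lo': "(\<lambda>n. T (kf n) * (real (kf n) / real (Suc (kf n)))^2) \<longlonglongrightarrow> L"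
    using filterlim_compose[OF Lo kf_lim] by simp
  show ?thesis
  proof (rule tendsto_sandwich[OF _ _ Lo' U'])
    show "eventually (\<lambda>n. T (kf n) * (real (kf n) / real (Suc (kf n)))^2 \<le> a n / real n) sequentially"
      using kf_pos
    proof eventually_elim
      case (elim n)
      define k where "k = kf n"
      have k1: "1 \<le> k" using elim by (simp add: k_def)
      have nb: "k^2 \<le> n" "n < (Suc k)^2" using kf_bounds[of n] unfolding k_def[symmetric] by auto
      have b1: "real k ^ 2 \<le> real n" "real n < real (Suc k) ^ 2"
      proof -
        have "real (k^2) \<le> real n" using nb(1) by (simp only: of_nat_le_iff)
        then show "real k ^ 2 \<le> real n" by simp
        have "real n < real ((Suc k)^2)" using nb(2) by (simp only: of_nat_less_iff)
        then show "real n < real (Suc k) ^ 2" by (simp only: of_nat_power)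
      qed
      have "1 \<le> k^2" using k1 by simp
      then have np: "0 < real n" using nb by simp
      have "T k * (real k / real (Suc k))^2 = a (k^2) / (real (Suc k))^2"
        using k1 by (simp add: T_def power_divide)
      also have "\<dots> \<le> a n / (real (Suc k))^2"
        using kf_bounds[of n] unfolding k_def[symmetric] by (intro divide_right_mono mono) auto
      also have "\<dots> \<le> a n / real n"
        using b1 np nonneg[of n] by (intro divide_left_mono) auto
      finally show ?case by (simp add: k_def)
    qed
    show "eventually (\<lambda>n. a n / real n \<le> T (Suc (kf n)) * ((real (Suc (kf n))) / real (kf n))^2) sequentially"
      using kf_pos
    proof eventually_elim
      case (elim n)
      define k where "k = kf n"
      have k1: "1 \<le> k" using elim by (simp add: k_def)
      have nb: "k^2 \<le> n" "n < (Suc k)^2" using kf_bounds[of n] unfolding k_def[symmetric] by auto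
      have b1: "real k ^ 2 \<le> real n" "real n < real (Suc k) ^ 2"
      proof -
        have "real (k^2) \<le> real n" using nb(1) by (simp only: of_nat_le_iff)
        then show "real k ^ 2 \<le> real n" by simp
        have "real n < real ((Suc k)^2)" using nb(2) by (simp only: of_nat_less_iff)
        then show "real n < real (Suc k) ^ 2" by (simp only: of_nat_power)
      qed
      have kp: "0 < real k ^ 2" using k1 by simp
      have "a n / real n \<le> a ((Suc k)^2) / real n"
        using kf_bounds[of n] unfolding k_def[symmetric] by (intro divide_right_mono mono) auto
      also have "\<dots> \<le> a ((Suc k)^2) / (real k)^2"
      proof (rule divide_left_mono)
        show "0 \<le> a ((Suc k)^2)" by (rule nonneg)
        show "real k ^ 2 \<le> real n" by (rule b1(1))
        have "0 < real n" using b1(1) kp by linarith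
        then show "0 < real n * real k ^ 2" using kp by simp
      qed
      also have "\<dots> = T (Suc k) * ((real (Suc k)) / real k)^2"
        using k1 by (simp add: T_def power_divide del: of_nat_Suc)
      finally show ?case by (simp add: k_def)
    qed
  qed
qed


context mle_setting begin

definition "X i \<omega> = Y i \<omega> - mu"
definition "T n \<omega> = (\<Sum>i<n. X i \<omega>)"

lemma X_meas[measurable]: "X i \<in> borel_measurable M" unfolding X_def by measurable
lemma T_meas[measurable]: "T n \<in> borel_measurable M" unfolding T_def by measurable

lemma X_indep: "indep_vars (\<lambda>_. borel) X UNIV"
proof -
  have "indep_vars (\<lambda>_. borel) (\<lambda>i x. (\<lambda>w. \<bar>logit w\<bar> - mu) (W i x)) UNIV"
    by (rule indep_vars_compose2[OF indep]) measurable
  moreover have "X = (\<lambda>i x. (\<lambda>w. \<bar>logit w\<bar> - mu) (W i x))" by (auto simp: fun_eq_iff X_def Y_def)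
  ultimately show ?thesis by simp
qed

lemma X_sq_int: "integrable M (\<lambda>\<omega>. X i \<omega> ^ 2)"
proof -
  have "(\<lambda>\<omega>. X i \<omega> ^ 2) = (\<lambda>\<omega>. Y i \<omega> ^ 2 - 2 * mu * Y i \<omega> + mu\<^sup>2)"
    by (auto simp: X_def power2_diff fun_eq_iff algebra_simps)
  moreover have "integrable M (\<lambda>\<omega>. Y i \<omega> ^ 2 - 2 * mu * Y i \<omega> + mu\<^sup>2)"
    using Y_int[of i 2] Y_int1[of i] by (intro Bochner_Integration.integrable_add Bochner_Integration.integrable_diff integrable_mult_right) auto
  ultimately show ?thesis by simp
qed

lemma X_int: "integrable M (X i)"
  unfolding X_def using Y_int1[of i] by auto

lemma EX: "expectation (X i) = 0"
  unfolding X_def using Y_int1[of i] EY[of i] by (simp add: prob_space)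

lemma EX2: "expectation (\<lambda>\<omega>. X i \<omega> ^ 2) = mu\<^sup>2"
  using varY[of i] EY[of i] by (simp add: X_def)

lemma Xprod:
  shows "integrable M (\<lambda>\<omega>. X i \<omega> * X j \<omega>)"
    and "expectation (\<lambda>\<omega>. X i \<omega> * X j \<omega>) = (if j = i then mu\<^sup>2 else 0)"
proof -
  have "integrable M (\<lambda>\<omega>. X i \<omega> * X j \<omega>) \<and> expectation (\<lambda>\<omega>. X i \<omega> * X j \<omega>) = (if j = i then mu\<^sup>2 else 0)"
  proof (cases "j = i")
    case True
    then show ?thesis using X_sq_int[of i] EX2[of i] by (simp add: power2_eq_square)
  next
    case False
    have ind: "indep_vars (\<lambda>_. borel) X {i, j}"
      by (rule indep_vars_subset[OF X_indep]) auto
    have p: "(\<Prod>k\<in>{i, j}. X k \<omega>) = X i \<omega> * X j \<omega>" for \<omega> using False by simp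
    have "integrable M (\<lambda>\<omega>. \<Prod>k\<in>{i, j}. X k \<omega>)"
      by (rule indep_vars_integrable[OF _ ind]) (auto intro: X_int)
    moreover have "expectation (\<lambda>\<omega>. \<Prod>k\<in>{i, j}. X k \<omega>) = (\<Prod>k\<in>{i, j}. expectation (X k))"
      by (rule indep_vars_lebesgue_integral[OF _ ind]) (auto intro: X_int)
    ultimately show ?thesis using False by (simp add: p EX)
  qed
  then show "integrable M (\<lambda>\<omega>. X i \<omega> * X j \<omega>)"
    and "expectation (\<lambda>\<omega>. X i \<omega> * X j \<omega>) = (if j = i then mu\<^sup>2 else 0)" by auto
qed

lemma T_sq:
  shows "integrable M (\<lambda>\<omega>. (T n \<omega>)^2)" and "expectation (\<lambda>\<omega>. (T n \<omega>)^2) = real n * mu\<^sup>2"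
proof -
  have eq: "(\<lambda>\<omega>. (T n \<omega>)^2) = (\<lambda>\<omega>. \<Sum>i<n. \<Sum>j<n. X i \<omega> * X j \<omega>)"
    by (auto simp: T_def power2_eq_square sum_product fun_eq_iff)
  show "integrable M (\<lambda>\<omega>. (T n \<omega>)^2)"
    unfolding eq by (intro Bochner_Integration.integrable_sum Xprod)
  have "expectation (\<lambda>\<omega>. \<Sum>i<n. \<Sum>j<n. X i \<omega> * X j \<omega>) = (\<Sum>i<n. \<Sum>j<n. expectation (\<lambda>\<omega>. X i \<omega> * X j \<omega>))"
    by (simp add: Bochner_Integration.integral_sum Bochner_Integration.integrable_sum Xprod)
  also have "\<dots> = (\<Sum>i<n. \<Sum>j<n. (if j = i then mu\<^sup>2 else 0))" by (simp add: Xprod)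
  also have "\<dots> = real n * mu\<^sup>2" by simp
  finally show "expectation (\<lambda>\<omega>. (T n \<omega>)^2) = real n * mu\<^sup>2" unfolding eq .
qed

lemma T_int: "integrable M (T n)"
  unfolding T_def by (intro Bochner_Integration.integrable_sum X_int)

lemma ET: "expectation (T n) = 0"
  unfolding T_def by (simp add: Bochner_Integration.integral_sum X_int EX)

lemma T_S: "T n \<omega> = S n \<omega> - real n * mu"
  unfolding T_def S_def X_def by (simp add: sum_subtractf)

lemma cheb: 
  assumes "0 < a"
  shows "prob {x \<in> space M. a \<le> \<bar>T n x\<bar>} \<le> real n * mu\<^sup>2 / a\<^sup>2"
proof -
  have "prob {x \<in> space M. a \<le> \<bar>T n x - expectation (T n)\<bar>} \<le> variance (T n) / a\<^sup>2"
    by (rule Chebyshev_inequality) (use assms T_sq(1)[of n] in auto)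
  then show ?thesis using T_sq(2)[of n] by (simp add: ET)
qed

lemma AE_sq_eps:
  assumes e: "0 < e"
  shows "AE x in M. eventually (\<lambda>k. \<bar>T (k^2) x\<bar> < e * (real k)^2) sequentially"
proof -
  define A where "A k = {x \<in> space M. e * (real k)^2 \<le> \<bar>T (k^2) x\<bar>}" for k
  have A_sets[measurable]: "A k \<in> sets M" for k unfolding A_def by measurable
  have bnd: "prob (A k) \<le> mu\<^sup>2 / e\<^sup>2 * inverse (real k ^ 2)" if k: "k \<ge> 1" for k
  proof -
    have "prob (A k) \<le> real (k^2) * mu\<^sup>2 / (e * (real k)^2)\<^sup>2"
      unfolding A_def by (rule cheb) (use e k in simp)
    also have "\<dots> = mu\<^sup>2 / e\<^sup>2 * inverse (real k ^ 2)"
      using k e by (simp add: field_simps power2_eq_square)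
    finally show ?thesis .
  qed
  have "summable (\<lambda>k. mu\<^sup>2 / e\<^sup>2 * inverse (real k ^ 2))"
    by (intro summable_mult inverse_power_summable) simp
  then have "summable (\<lambda>k. measure M (A k))"
    by (rule summable_comparison_test'[where N=1]) (use bnd in auto)
  then have "AE x in M. eventually (\<lambda>k. x \<in> space M - A k) sequentially"
    by (intro borel_cantelli_AE1) (auto simp: less_top[symmetric])
  then show ?thesis
    by (rule AE_mp) (auto intro!: AE_I2 elim!: eventually_mono simp: A_def)
qed

lemma AE_sq: "AE x in M. (\<lambda>k. S (k^2) x / (real k)^2) \<longlonglongrightarrow> mu"
proof -
  have "AE x in M. \<forall>m::nat. eventually (\<lambda>k. \<bar>T (k^2) x\<bar> < (1 / real (Suc m)) * (real k)^2) sequentially"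
    unfolding AE_all_countable by (intro allI AE_sq_eps) simp
  then show ?thesis
  proof (rule AE_mp, intro AE_I2 impI)
    fix x assume H: "\<forall>m::nat. eventually (\<lambda>k. \<bar>T (k^2) x\<bar> < (1 / real (Suc m)) * (real k)^2) sequentially"
    show "(\<lambda>k. S (k^2) x / (real k)^2) \<longlonglongrightarrow> mu"
      unfolding tendsto_iff
    proof (intro allI impI)
      fix r :: real assume r: "0 < r"
      obtain m0 where m0: "0 < m0" "inverse (real m0) < r" using ex_inverse_of_nat_less[OF r] by blast
      define m where "m = m0 - 1"
      have m: "inverse (real (Suc m)) < r" using m0 by (simp add: m_def)
      have ev1: "eventually (\<lambda>k. (1::nat) \<le> k) sequentially" by (rule eventually_ge_at_top)
      show "eventually (\<lambda>k. dist (S (k^2) x / (real k)^2) mu < r) sequentially"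
        using H[rule_format, of m] ev1
      proof eventually_elim
        case (elim k)
        have kp: "0 < (real k)^2" using elim by simp
        have "S (k^2) x / (real k)^2 - mu = T (k^2) x / (real k)^2"
          using kp by (simp add: T_S field_simps)
        then have "dist (S (k^2) x / (real k)^2) mu = \<bar>T (k^2) x\<bar> / (real k)^2"
          by (simp add: dist_real_def abs_divide)
        also have "\<dots> < 1 / real (Suc m)"
          using elim kp by (simp add: divide_less_eq)
        also have "\<dots> < r" using m by (simp add: inverse_eq_divide)
        finally show ?case .
      qed
    qed
  qed
qed

lemma SLLN: "AE x in M. (\<lambda>n. S n x / real n) \<longlonglongrightarrow> mu"
  using AE_sq
proof (rule AE_mp, intro AE_I2 impI)
  fix x assume "(\<lambda>k. S (k^2) x / (real k)^2) \<longlonglongrightarrow> mu"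
  then show "(\<lambda>n. S n x / real n) \<longlonglongrightarrow> mu"
  proof (rule sandwich_sq[rotated 2])
    show "S m x \<le> S n x" if "m \<le> n" for m n
      unfolding S_def using that by (intro sum_mono2) (auto simp: Y_nonneg)
    show "0 \<le> S n x" for n unfolding S_def by (intro sum_nonneg) (simp add: Y_nonneg)
  qed
qed

end


lemma arith_id:
  fixes r m a S :: real
  assumes "0 < r" "0 < m"
  shows "r * (a * S / (r * r) - a * m) = a * m * ((S - r * r * m) / (r * m))"
  using assms by (simp add: field_simps)

lemma weak_conv_m_eventually:
  assumes "\<And>n. 1 \<le> n \<Longrightarrow> A n = B n" and "weak_conv_m B L"
  shows "weak_conv_m A L"
  using assms(2) unfolding weak_conv_m_def weak_conv_def
proof (intro allI impI)
  fix x assume H: "\<forall>x. isCont (cdf L) x \<longrightarrow> (\<lambda>n. cdf (B n) x) \<longlonglongrightarrow> cdf L x" and c: "isCont (cdf L) x"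
  have ev: "eventually (\<lambda>n. cdf (B n) x = cdf (A n) x) sequentially"
    using eventually_ge_at_top[of 1] by eventually_elim (simp add: assms(1))
  have "(\<lambda>n. cdf (B n) x) \<longlonglongrightarrow> cdf L x" using H c by blast
  then show "(\<lambda>n. cdf (A n) x) \<longlonglongrightarrow> cdf L x"
    using tendsto_cong[OF ev] by simp
qed

context mle_setting begin

lemma Y_indep: "indep_vars (\<lambda>_. borel) Y UNIV"
proof -
  have "indep_vars (\<lambda>_. borel) (\<lambda>i x. (\<lambda>w. \<bar>logit w\<bar>) (W i x)) UNIV"
    by (rule indep_vars_compose2[OF indep]) measurable
  moreover have "Y = (\<lambda>i x. (\<lambda>w. \<bar>logit w\<bar>) (W i x))" by (auto simp: fun_eq_iff Y_def)
  ultimately show ?thesis by simp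
qed

lemma sigma_mu: "\<sigma>0 = sqrt 2 * mu"
  using pos by (simp add: mu_def l_def)

definition "G \<omega> \<longleftrightarrow> (\<forall>i. 0 < W i \<omega> \<and> W i \<omega> < 1) \<and> 0 < Y 0 \<omega>"

lemma AE_G: "AE \<omega> in M. G \<omega>"
proof -
  have "AE \<omega> in M. \<forall>i. 0 < W i \<omega> \<and> W i \<omega> < 1"
    unfolding AE_all_countable by (intro allI AE_W01)
  with AE_Ypos[of 0] show ?thesis unfolding G_def by eventually_elim auto
qed

lemma good:
  assumes "G \<omega>" "1 \<le> n"
  shows "\<exists>!s. is_mle (\<lambda>i. W i \<omega>) n s" and "mle (\<lambda>i. W i \<omega>) n = sqrt 2 * S n \<omega> / n"
proof -
  have w: "\<forall>i<n. 0 < W i \<omega> \<and> W i \<omega> < 1" using assms by (auto simp: G_def)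
  have "Y 0 \<omega> \<le> S n \<omega>" unfolding S_def using assms(2)
    by (intro member_le_sum) (auto simp: Y_nonneg)
  moreover have "0 < Y 0 \<omega>" using assms(1) by (simp add: G_def)
  ultimately have "0 < S n \<omega>" by linarith
  then have "0 < (\<Sum>i<n. \<bar>logit (W i \<omega>)\<bar>)" by (simp add: S_def Y_def)
  from unique_good[OF assms(2) w this]
  show "\<exists>!s. is_mle (\<lambda>i. W i \<omega>) n s" and "mle (\<lambda>i. W i \<omega>) n = sqrt 2 * S n \<omega> / n"
    by (simp_all add: S_def Y_def)
qed

lemma mle_meas[measurable]: "(\<lambda>\<omega>. mle (\<lambda>i. W i \<omega>) n) \<in> borel_measurable M"
  unfolding mle_formula by measurable

lemma part1: "AE \<omega> in M. eventually (\<lambda>n. \<exists>!s. is_mle (\<lambda>i. W i \<omega>) n s) sequentially"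
  using AE_G
proof eventually_elim
  case (elim \<omega>)
  show ?case using eventually_ge_at_top[of 1] by eventually_elim (rule good(1)[OF elim])
qed

lemma part2: "AE \<omega> in M. (\<lambda>n. mle (\<lambda>i. W i \<omega>) n) \<longlonglongrightarrow> \<sigma>0"
  using AE_G SLLN
proof eventually_elim
  case (elim \<omega>)
  have lim: "(\<lambda>n. sqrt 2 * (S n \<omega> / real n)) \<longlonglongrightarrow> sqrt 2 * mu"
    by (intro tendsto_mult tendsto_const elim)
  have ev: "eventually (\<lambda>n. sqrt 2 * (S n \<omega> / real n) = mle (\<lambda>i. W i \<omega>) n) sequentially"
    using eventually_ge_at_top[of 1] by eventually_elim (simp add: good(2)[OF elim(1)])
  show ?case using lim tendsto_cong[OF ev] sigma_mu by simp
qed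

lemma part3: "weak_conv_m (\<lambda>n. distr M borel (\<lambda>\<omega>. sqrt (real n) * (mle (\<lambda>i. W i \<omega>) n - \<sigma>0)))
                  (density lborel (normal_density 0 \<sigma>0))"
proof -
  define Z where "Z n x = (\<Sum>i<n. Y i x - mu) / sqrt (real n * mu\<^sup>2)" for n x
  have Zm[measurable]: "Z n \<in> borel_measurable M" for n unfolding Z_def by measurable
  have clt: "weak_conv_m (\<lambda>n. distr M borel (Z n)) std_normal_distribution"
  proof -
    have dY: "\<And>n. distr M borel (Y n) = distr M borel (Y 0)" using distrY by simp
    have Yi2: "\<And>n. integrable M (\<lambda>x. (Y n x)\<^sup>2)" using Y_int by simp
    show ?thesis unfolding Z_def
      using central_limit_theorem[OF Y_indep EY mu_pos Yi2 varY dY] by simp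
  qed
  have sc: "weak_conv_m (\<lambda>n. distr M borel (\<lambda>\<omega>. \<sigma>0 * Z n \<omega>)) (density lborel (normal_density 0 \<sigma>0))"
    by (rule weak_conv_scale[OF prob_space_axioms Zm pos clt])
  show ?thesis
  proof (rule weak_conv_m_eventually[OF _ sc])
    fix n :: nat assume n: "1 \<le> n"
    show "distr M borel (\<lambda>\<omega>. sqrt (real n) * (mle (\<lambda>i. W i \<omega>) n - \<sigma>0)) = distr M borel (\<lambda>\<omega>. \<sigma>0 * Z n \<omega>)"
    proof (rule distr_cong_AE)
      show "AE x in M. sqrt (real n) * (mle (\<lambda>i. W i x) n - \<sigma>0) = \<sigma>0 * Z n x"
        using AE_G
      proof eventually_elim
        case (elim x)
        define r where "r = sqrt (real n)"
        have r0: "0 < r" using n by (simp add: r_def)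
        have rn: "real n = r^2" by (simp add: r_def)
        have sq: "sqrt (real n * mu\<^sup>2) = r * mu" using mu_pos by (simp add: r_def real_sqrt_mult)
        have sum: "(\<Sum>i<n. Y i x - mu) = S n x - real n * mu" by (simp add: S_def sum_subtractf)
        have nr: "real n = r * r" using rn by (simp add: power2_eq_square)
        have "sqrt (real n) * (mle (\<lambda>i. W i x) n - \<sigma>0) = r * (sqrt 2 * S n x / (r * r) - sqrt 2 * mu)"
        proof -
          have m: "mle (\<lambda>i. W i x) n = sqrt 2 * S n x / (r * r)" using good(2)[OF elim n] nr by simp
          have q: "sqrt (real n) = r" by (simp add: r_def)
          show ?thesis by (simp only: m q sigma_mu[symmetric])
        qed
        also have "\<dots> = sqrt 2 * mu * ((S n x - r * r * mu) / (r * mu))"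
          by (rule arith_id[OF r0 mu_pos])
        also have "\<dots> = \<sigma>0 * Z n x"
        proof -
          have "Z n x = (S n x - r * r * mu) / (r * mu)" unfolding Z_def sq sum unfolding nr ..
          then show ?thesis by (simp only: sigma_mu[symmetric])
        qed
        finally show ?case .
      qed
      show "(\<lambda>\<omega>. sqrt (real n) * (mle (\<lambda>i. W i \<omega>) n - \<sigma>0)) \<in> borel_measurable M" by measurable
      show "(\<lambda>\<omega>. \<sigma>0 * Z n \<omega>) \<in> borel_measurable M" by measurable
    qed simp_all
  qed
qed

end



theorem proposition7:
  fixes M :: "'a measure" and W :: "nat \<Rightarrow> 'a \<Rightarrow> real" and \<sigma>0 :: real
  assumes "prob_space M"
    and "prob_space.indep_vars M (\<lambda>_. borel) W UNIV"
    and "\<And>i. distributed M lborel (W i) (\<lambda>w. ennreal (fW \<sigma>0 w))"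
    and "0 < \<sigma>0"
  shows "(AE \<omega> in M. eventually (\<lambda>n. \<exists>!s. is_mle (\<lambda>i. W i \<omega>) n s) sequentially)
    \<and> (AE \<omega> in M. (\<lambda>n. mle (\<lambda>i. W i \<omega>) n) \<longlonglongrightarrow> \<sigma>0)
    \<and> weak_conv_m (\<lambda>n. distr M borel (\<lambda>\<omega>. sqrt (real n) * (mle (\<lambda>i. W i \<omega>) n - \<sigma>0)))
                  (density lborel (normal_density 0 \<sigma>0))"
proof -
  interpret mle_setting M W \<sigma>0
    by (rule mle_setting.intro[OF assms(1)], rule mle_setting_axioms.intro) (use assms in auto)
  show ?thesis using part1 part2 part3 by blast
qed

end
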